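(* Let $\delta>0$ and let $K=\{(k,b):k\in[k_-,k_+],\ b\in[b_-,b_+]\}$ with $0<k_-\le k_+$ and $\delta<b_-\le b_+$. For $\lambda$ in some index set, let $\nu(\lambda,dx)=\sum_{m=1}^M\pi_m(\lambda)\Gamma(k_m,b_m)(dx)$ and $\hat\nu(\lambda,dx)=\sum_{m=1}^M\hat\pi_m(\lambda)\Gamma(\hat k_m,\hat b_m)(dx)$, where $(\pi_m(\lambda))_m$ and $(\hat\pi_m(\lambda))_m$ are probability vectors and all $(k_m,b_m),(\hat k_m,\hat b_m)\in K$. Then there exist constants $C_k,C_b<\infty$ depending only on $(k_\pm,b_\pm,\delta)$ such that for each $\lambda$, $$\|\nu(\lambda,\cdot)-\hat\nu(\lambda,\cdot)\|_{TV,\delta}\le\sum_{m=1}^M|\pi_m(\lambda)-\hat\pi_m(\lambda)|\,M_{k_m,b_m}(\delta)+\sum_{m=1}^M\hat\pi_m(\lambda)\big(C_k|k_m-\hat k_m|+C_b|b_m-\hat b_m|\big),$$ where $M_{k,b}(\delta)=\big(\tfrac{b}{b-\delta}\big)^k$.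
   Context: $\Gamma(k,b)(dx)=f_{k,b}(x)dx$ with $f_{k,b}(x)=\frac{b^k}{\Gamma(k)}x^{k-1}e^{-bx}$ on $(0,\infty)$. For a finite signed measure $\sigma$ on $\mathbb R_+$, $\|\sigma\|_{TV,\delta}=\int_0^\infty e^{\delta x}|\sigma|(dx)$ with $|\sigma|$ the total variation measure. *)

theory Defs
  imports "HOL-Analysis.Analysis"
begin

definition gamma_dens :: "real \<Rightarrow> real \<Rightarrow> real \<Rightarrow> real" where
  "gamma_dens k b x = (if 0 < x then b powr k / Gamma k * x powr (k - 1) * exp (- b * x) else 0)"

definition gamma_mix_dens :: "nat \<Rightarrow> (nat \<Rightarrow> real) \<Rightarrow> (nat \<Rightarrow> real) \<Rightarrow> (nat \<Rightarrow> real) \<Rightarrow> real \<Rightarrow> real" where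
  "gamma_mix_dens M w k b x = (\<Sum>m=1..M. w m * gamma_dens (k m) (b m) x)"

text \<open>Weighted total variation norm of the signed measure (p - q) dx on R_+, for
  absolutely continuous measures with densities p, q: the total variation measure
  of (p - q) dx is |p - q| dx.\<close>
definition weighted_tv_dens :: "real \<Rightarrow> (real \<Rightarrow> real) \<Rightarrow> (real \<Rightarrow> real) \<Rightarrow> ennreal" where
  "weighted_tv_dens \<delta> p q = (\<integral>\<^sup>+ x\<in>{0..}. ennreal (exp (\<delta> * x) * \<bar>p x - q x\<bar>) \<partial>lborel)"

definition gamma_mgf_bound :: "real \<Rightarrow> real \<Rightarrow> real \<Rightarrow> real" where
  "gamma_mgf_bound k b \<delta> = (b / (b - \<delta>)) powr k"

end

theory Submission
  imports Defs
begin

definition phi :: "real \<Rightarrow> real \<Rightarrow> real \<Rightarrow> real \<Rightarrow> real" where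
  "phi d x k b = exp (k * ln b + (k - 1) * ln x - (b - d) * x) / Gamma k"

lemma Gamma_pos_real: "0 < (k::real) \<Longrightarrow> 0 < Gamma k"
  using Gamma_real_pos_exp by simp

lemma phi_eq: assumes "0 < x" "0 < b"
  shows "exp (d * x) * gamma_dens k b x = phi d x k b"
  using assms unfolding phi_def gamma_dens_def
  by (simp add: powr_def exp_add exp_diff exp_minus field_simps algebra_simps)

lemma phi_nonneg: "0 < k \<Longrightarrow> 0 \<le> phi d x k b"
  unfolding phi_def using Gamma_pos_real[of k] by simp

lemma not_nonpos_int: "0 < (k::real) \<Longrightarrow> k \<notin> \<int>\<^sub>\<le>\<^sub>0"
  by (auto elim!: nonpos_Ints_cases)

lemma phi_deriv_k: assumes "0 < k"
  shows "((\<lambda>k. phi d x k b) has_field_derivative phi d x k b * (ln b + ln x - Digamma k)) (at k within S)"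
proof -
  have g: "Gamma k \<noteq> 0" using Gamma_pos_real[OF assms] by simp
  show ?thesis unfolding phi_def
    using not_nonpos_int[OF assms] g
    by (auto intro!: derivative_eq_intros simp: field_simps power2_eq_square)
qed

lemma phi_deriv_b: assumes "0 < b" "0 < k"
  shows "((\<lambda>b. phi d x k b) has_field_derivative phi d x k b * (k / b - x)) (at b within S)"
proof -
  have g: "Gamma k \<noteq> 0" using Gamma_pos_real[OF assms(2)] by simp
  show ?thesis unfolding phi_def using assms g
    by (auto intro!: derivative_eq_intros simp: field_simps power2_eq_square)
qed

lemma ln_abs_bound: assumes x: "0 < (x::real)" and s: "0 < s"
  shows "\<bar>ln x\<bar> \<le> x powr (- s) / s + x"
proof (cases "1 \<le> x")
  case True
  then have "0 \<le> ln x" by simp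
  moreover have "ln x \<le> x - 1" using x by (rule ln_le_minus_one)
  moreover have "0 \<le> x powr (- s) / s" using s by simp
  ultimately show ?thesis by linarith
next
  case False
  then have "ln x < 0" using x by simp
  have "ln (x powr (- s)) \<le> x powr (- s) - 1" using x by (intro ln_le_minus_one) simp
  moreover have "ln (x powr (- s)) = - s * ln x" using x by (simp add: ln_powr)
  ultimately have "- s * ln x \<le> x powr (- s)" by linarith
  then have "- ln x \<le> x powr (- s) / s" using s by (simp add: field_simps)
  then show ?thesis using \<open>ln x < 0\<close> x by simp
qed

lemma powr_between: assumes x: "0 < (x::real)" and k: "km \<le> k" "k \<le> kp"
  shows "x powr (k - 1) \<le> x powr (km - 1) + x powr (kp - 1)"
proof (cases "x \<le> 1")
  case True
  then have "x powr (k - 1) \<le> x powr (km - 1)" using x k by (intro powr_mono') auto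
  then show ?thesis by (smt (verit) powr_ge_zero)
next
  case False
  then have "x powr (k - 1) \<le> x powr (kp - 1)" using x k by (intro powr_mono) auto
  then show ?thesis by (smt (verit) powr_ge_zero)
qed

lemma phi_bound:
  assumes x: "0 < x" and k: "k \<in> {km..kp}" and b: "b \<in> {bm..bp}" and km: "0 < km" and db: "d < bm" and d: "0 < d"
    and Gi: "\<forall>k\<in>{km..kp}. 1 / Gamma k \<le> Gi"
  shows "phi d x k b \<le> exp (kp * (\<bar>ln bm\<bar> + \<bar>ln bp\<bar>)) * Gi * ((x powr (km - 1) + x powr (kp - 1)) * exp (- (bm - d) * x))"
proof -
  have kpos: "0 < k" using k km by auto
  have bpos: "0 < b" using b db d by auto
  have bm0: "0 < bm" using db d by auto
  have "phi d x k b = exp (k * ln b) * (x powr (k - 1) * exp (- (b - d) * x)) * (1 / Gamma k)"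
    unfolding phi_def using x by (simp add: powr_def exp_add exp_diff exp_minus field_simps)
  also have "\<dots> \<le> exp (kp * (\<bar>ln bm\<bar> + \<bar>ln bp\<bar>)) * ((x powr (km - 1) + x powr (kp - 1)) * exp (- (bm - d) * x)) * Gi"
  proof (rule mult_mono[OF mult_mono])
    have "\<bar>ln b\<bar> \<le> \<bar>ln bm\<bar> + \<bar>ln bp\<bar>"
    proof -
      have "ln bm \<le> ln b" "ln b \<le> ln bp" using b bm0 by auto
      then show ?thesis by linarith
    qed
    then have "k * ln b \<le> kp * (\<bar>ln bm\<bar> + \<bar>ln bp\<bar>)"
      using k kpos
      by (smt (verit, ccfv_SIG) abs_ge_self atLeastAtMost_iff mult_left_mono mult_mono)
    then show "exp (k * ln b) \<le> exp (kp * (\<bar>ln bm\<bar> + \<bar>ln bp\<bar>))" by simp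
    show "x powr (k - 1) * exp (- (b - d) * x) \<le> (x powr (km - 1) + x powr (kp - 1)) * exp (- (bm - d) * x)"
      using powr_between[OF x, of km k kp] k b x
      by (intro mult_mono) (auto simp: mult_right_mono)
    show "1 / Gamma k \<le> Gi" using Gi k by auto
  qed (use Gamma_pos_real[OF kpos] in \<open>auto simp: add_nonneg_nonneg\<close>)
  finally show ?thesis by (simp add: ac_simps)
qed

definition ex :: "real \<Rightarrow> real \<Rightarrow> nat \<Rightarrow> real" where
  "ex km kp i = [km, kp, km / 2, kp - km / 2, km + 1, kp + 1] ! i"

definition Pw :: "real \<Rightarrow> real \<Rightarrow> real \<Rightarrow> real" where
  "Pw km kp x = (\<Sum>i<6. x powr (ex km kp i - 1))"

lemma Pw_expand: "Pw km kp x = x powr (km - 1) + x powr (kp - 1) + x powr (km / 2 - 1)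
   + x powr (kp - km / 2 - 1) + x powr km + x powr kp"
  unfolding Pw_def ex_def by (simp add: eval_nat_numeral)

lemma Pw_nonneg: "0 \<le> Pw km kp x"
  unfolding Pw_def by (intro sum_nonneg) simp

lemma ex_pos: "0 < km \<Longrightarrow> km \<le> kp \<Longrightarrow> i < 6 \<Longrightarrow> 0 < ex km kp i"
  unfolding ex_def by (auto simp: less_Suc_eq eval_nat_numeral)

lemma alg_k: assumes x: "0 < x" and km: "0 < km" and c: "0 \<le> c"
  shows "(x powr (km - 1) + x powr (kp - 1)) * (c + x powr (- (km / 2)) / (km / 2) + x)
     \<le> (c + 2 / km + 1) * Pw km kp x"
proof -
  define a1 where "a1 = x powr (km - 1)"
  define a2 where "a2 = x powr (kp - 1)"
  define a3 where "a3 = x powr (km / 2 - 1)"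
  define a4 where "a4 = x powr (kp - km / 2 - 1)"
  define a5 where "a5 = x powr km"
  define a6 where "a6 = x powr kp"
  have e3: "x powr (km - 1) * x powr (- (km / 2)) = a3" unfolding a3_def
    using x by (simp add: powr_add[symmetric])
  have e4: "x powr (kp - 1) * x powr (- (km / 2)) = a4" unfolding a4_def
    using x powr_add[of x "kp - 1" "- (km / 2)"] by (simp add: algebra_simps)
  have e5: "x powr (km - 1) * x = a5" unfolding a5_def
    using x powr_add[of x "km - 1" 1] by simp
  have e6: "x powr (kp - 1) * x = a6" unfolding a6_def
    using x powr_add[of x "kp - 1" 1] by simp
  have L: "(x powr (km - 1) + x powr (kp - 1)) * (c + x powr (- (km / 2)) / (km / 2) + x)
     = c * (a1 + a2) + (2 / km) * (a3 + a4) + a5 + a6"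
    using e3 e4 e5 e6 km unfolding a1_def a2_def by (simp add: algebra_simps)
  have R: "Pw km kp x = a1 + a2 + a3 + a4 + a5 + a6"
    unfolding Pw_expand a1_def a2_def a3_def a4_def a5_def a6_def by simp
  have nn: "0 \<le> a1" "0 \<le> a2" "0 \<le> a3" "0 \<le> a4" "0 \<le> a5" "0 \<le> a6"
    unfolding a1_def a2_def a3_def a4_def a5_def a6_def by simp_all
  have "(c + 2 / km + 1) * (a1 + a2 + a3 + a4 + a5 + a6) - (c * (a1 + a2) + (2 / km) * (a3 + a4) + a5 + a6)
    = c * (a3 + a4 + a5 + a6) + (2 / km) * (a1 + a2 + a5 + a6) + (a1 + a2 + a3 + a4)"
    using km by (simp add: field_simps)
  moreover have "0 \<le> c * (a3 + a4 + a5 + a6) + (2 / km) * (a1 + a2 + a5 + a6) + (a1 + a2 + a3 + a4)"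
    using nn c km by (intro add_nonneg_nonneg mult_nonneg_nonneg) auto
  ultimately show ?thesis unfolding L R by linarith
qed

lemma alg_b: assumes x: "0 < x" and c: "0 \<le> c"
  shows "(x powr (km - 1) + x powr (kp - 1)) * (c + x) \<le> (c + 1) * Pw km kp x"
proof -
  define a1 where "a1 = x powr (km - 1)"
  define a2 where "a2 = x powr (kp - 1)"
  define a3 where "a3 = x powr (km / 2 - 1)"
  define a4 where "a4 = x powr (kp - km / 2 - 1)"
  define a5 where "a5 = x powr km"
  define a6 where "a6 = x powr kp"
  have e5: "x powr (km - 1) * x = a5" unfolding a5_def
    using x powr_add[of x "km - 1" 1] by simp
  have e6: "x powr (kp - 1) * x = a6" unfolding a6_def
    using x powr_add[of x "kp - 1" 1] by simp
  have L: "(x powr (km - 1) + x powr (kp - 1)) * (c + x) = c * (a1 + a2) + a5 + a6"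
    using e5 e6 unfolding a1_def a2_def by (simp add: algebra_simps)
  have R: "Pw km kp x = a1 + a2 + a3 + a4 + a5 + a6"
    unfolding Pw_expand a1_def a2_def a3_def a4_def a5_def a6_def by simp
  have nn: "0 \<le> a1" "0 \<le> a2" "0 \<le> a3" "0 \<le> a4" "0 \<le> a5" "0 \<le> a6"
    unfolding a1_def a2_def a3_def a4_def a5_def a6_def by simp_all
  have "(c + 1) * (a1 + a2 + a3 + a4 + a5 + a6) - (c * (a1 + a2) + a5 + a6)
    = c * (a3 + a4 + a5 + a6) + (a1 + a2 + a3 + a4)"
    by (simp add: algebra_simps)
  moreover have "0 \<le> c * (a3 + a4 + a5 + a6) + (a1 + a2 + a3 + a4)"
    using nn c by (intro add_nonneg_nonneg mult_nonneg_nonneg) auto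
  ultimately show ?thesis unfolding L R by linarith
qed

definition Cst :: "real \<Rightarrow> real \<Rightarrow> real \<Rightarrow> real \<Rightarrow> real \<Rightarrow> real \<Rightarrow> real" where
  "Cst km kp bm bp Gi Dg = exp (kp * (\<bar>ln bm\<bar> + \<bar>ln bp\<bar>)) * Gi
     * ((\<bar>ln bm\<bar> + \<bar>ln bp\<bar>) + Dg + 2 / km + 1 + kp / bm)"

lemma lip:
  assumes x: "0 < x" and km: "0 < km" and kk: "km \<le> kp" and d: "0 < d" and db: "d < bm" and bb: "bm \<le> bp"
    and Gi: "\<forall>k\<in>{km..kp}. 1 / Gamma k \<le> Gi" and Dg: "\<forall>z\<in>{km..kp}. \<bar>Digamma z\<bar> \<le> Dg"
    and k: "k \<in> {km..kp}" and k': "k' \<in> {km..kp}" and b: "b \<in> {bm..bp}" and b': "b' \<in> {bm..bp}"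
  shows "\<bar>phi d x k b - phi d x k' b'\<bar>
     \<le> (Cst km kp bm bp Gi Dg * (Pw km kp x * exp (- (bm - d) * x))) * (\<bar>k - k'\<bar> + \<bar>b - b'\<bar>)"
proof -
  define Lb where "Lb = \<bar>ln bm\<bar> + \<bar>ln bp\<bar>"
  define E where "E = exp (kp * Lb)"
  define e where "e = exp (- (bm - d) * x)"
  define A where "A = x powr (km - 1) + x powr (kp - 1)"
  define B where "B = Cst km kp bm bp Gi Dg * (Pw km kp x * e)"
  have bm0: "0 < bm" using d db by simp
  have Gi0: "0 \<le> Gi"
    using Gi kk Gamma_pos_real[OF km] by (smt (verit) atLeastAtMost_iff divide_pos_pos)
  have Dg0: "0 \<le> Dg" using Dg kk by (smt (verit) atLeastAtMost_iff)
  have Lb0: "0 \<le> Lb" unfolding Lb_def by simp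
  have E0: "0 \<le> E" unfolding E_def by simp
  have e0: "0 \<le> e" unfolding e_def by simp
  have A0: "0 \<le> A" unfolding A_def by simp
  have P0: "0 \<le> Pw km kp x" by (rule Pw_nonneg)
  have pb: "phi d x z c \<le> E * Gi * (A * e)" if "z \<in> {km..kp}" "c \<in> {bm..bp}" for z c
    using phi_bound[OF x that km db d Gi] unfolding E_def Lb_def A_def e_def .
  have lnb: "\<bar>ln c\<bar> \<le> Lb" if "c \<in> {bm..bp}" for c
  proof -
    have "ln bm \<le> ln c" "ln c \<le> ln bp" using that bm0 by auto
    then show ?thesis unfolding Lb_def by linarith
  qed
  have dk: "\<bar>phi d x z b * (ln b + ln x - Digamma z)\<bar> \<le> B" if z: "z \<in> {km..kp}" for z
  proof -
    have "\<bar>ln b + ln x - Digamma z\<bar> \<le> (Lb + Dg) + x powr (- (km / 2)) / (km / 2) + x"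
      using lnb[OF b] Dg z ln_abs_bound[OF x, of "km / 2"] km by force
    have "\<bar>phi d x z b * (ln b + ln x - Digamma z)\<bar> = phi d x z b * \<bar>ln b + ln x - Digamma z\<bar>"
      using phi_nonneg[of z d x b] z km by (simp add: abs_mult)
    also have "\<dots> \<le> (E * Gi * (A * e)) * ((Lb + Dg) + x powr (- (km / 2)) / (km / 2) + x)"
      using pb[OF z b] \<open>\<bar>ln b + ln x - Digamma z\<bar> \<le> _\<close> phi_nonneg[of z d x b] z km E0 Gi0 A0 e0
      by (intro mult_mono) auto
    also have "\<dots> = E * Gi * e * (A * ((Lb + Dg) + x powr (- (km / 2)) / (km / 2) + x))"
      by (simp add: ac_simps)
    also have "\<dots> \<le> E * Gi * e * (((Lb + Dg) + 2 / km + 1) * Pw km kp x)"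
      using alg_k[OF x km, of "Lb + Dg" kp] Lb0 Dg0 E0 Gi0 e0 unfolding A_def
      by (intro mult_left_mono) auto
    also have "\<dots> \<le> E * Gi * e * (((Lb + Dg) + 2 / km + 1 + kp / bm) * Pw km kp x)"
      using E0 Gi0 e0 P0 km kk bm0
      by (intro mult_left_mono mult_right_mono) auto
    also have "\<dots> = B" unfolding B_def Cst_def E_def Lb_def by (simp add: ac_simps)
    finally show ?thesis .
  qed
  have dbd: "\<bar>phi d x k' z * (k' / z - x)\<bar> \<le> B" if z: "z \<in> {bm..bp}" for z
  proof -
    have z0: "0 < z" using z bm0 by auto
    have k'0: "0 < k'" using k' km by auto
    have "k' / z \<le> kp / bm"
      using k' z z0 bm0 k'0 by (intro frac_le) auto
    moreover have "0 \<le> k' / z" using k'0 z0 by simp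
    ultimately have t: "\<bar>k' / z - x\<bar> \<le> kp / bm + x" using x by linarith
    have "\<bar>phi d x k' z * (k' / z - x)\<bar> = phi d x k' z * \<bar>k' / z - x\<bar>"
      using phi_nonneg[of k' d x z] k'0 by (simp add: abs_mult)
    also have "\<dots> \<le> (E * Gi * (A * e)) * (kp / bm + x)"
      using pb[OF k' z] t phi_nonneg[of k' d x z] k'0 E0 Gi0 A0 e0
      by (intro mult_mono) auto
    also have "\<dots> = E * Gi * e * (A * (kp / bm + x))"
      by (simp add: ac_simps)
    also have "\<dots> \<le> E * Gi * e * ((kp / bm + 1) * Pw km kp x)"
      using alg_b[OF x, of "kp / bm" km kp] km kk bm0 E0 Gi0 e0 unfolding A_def
      by (intro mult_left_mono) auto
    also have "\<dots> \<le> E * Gi * e * (((Lb + Dg) + 2 / km + 1 + kp / bm) * Pw km kp x)"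
      using E0 Gi0 e0 P0 km Lb0 Dg0
      by (intro mult_left_mono mult_right_mono) auto
    also have "\<dots> = B" unfolding B_def Cst_def E_def Lb_def by (simp add: ac_simps)
    finally show ?thesis .
  qed
  have s1: "\<bar>phi d x k b - phi d x k' b\<bar> \<le> B * \<bar>k - k'\<bar>"
  proof -
    have "norm ((\<lambda>z. phi d x z b) k - (\<lambda>z. phi d x z b) k') \<le> B * norm (k - k')"
    proof (rule field_differentiable_bound[where S = "{km..kp}"])
      fix z assume z: "z \<in> {km..kp}"
      then show "((\<lambda>z. phi d x z b) has_field_derivative phi d x z b * (ln b + ln x - Digamma z)) (at z within {km..kp})"
        using km by (intro phi_deriv_k) auto
      show "norm (phi d x z b * (ln b + ln x - Digamma z)) \<le> B" using dk[OF z] by simp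
    qed (use k k' in auto)
    then show ?thesis by simp
  qed
  have s2: "\<bar>phi d x k' b - phi d x k' b'\<bar> \<le> B * \<bar>b - b'\<bar>"
  proof -
    have "norm ((\<lambda>z. phi d x k' z) b - (\<lambda>z. phi d x k' z) b') \<le> B * norm (b - b')"
    proof (rule field_differentiable_bound[where S = "{bm..bp}"])
      fix z assume z: "z \<in> {bm..bp}"
      then show "((\<lambda>z. phi d x k' z) has_field_derivative phi d x k' z * (k' / z - x)) (at z within {bm..bp})"
        using km bm0 k' by (intro phi_deriv_b) auto
      show "norm (phi d x k' z * (k' / z - x)) \<le> B" using dbd[OF z] by simp
    qed (use b b' in auto)
    then show ?thesis by simp
  qed
  have "\<bar>phi d x k b - phi d x k' b'\<bar> \<le> B * \<bar>k - k'\<bar> + B * \<bar>b - b'\<bar>"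
    using s1 s2 by linarith
  then show ?thesis unfolding B_def e_def by (simp add: distrib_left)
qed

lemma gamma_nn_rate:
  fixes a c :: real assumes a: "0 < a" and c: "0 < c"
  shows "(\<integral>\<^sup>+x. ennreal (indicator {0..} x * x powr (a - 1) * exp (- c * x)) \<partial>lborel)
         = ennreal (Gamma a / c powr a)"
proof -
  let ?f = "\<lambda>t::real. ennreal (indicator {0..} t * t powr (a - 1) / exp t)"
  have "ennreal (Gamma a) = (\<integral>\<^sup>+t. ?f t \<partial>lborel)"
    using Gamma_conv_nn_integral_real[OF a] by simp
  also have "\<dots> = ennreal \<bar>c\<bar> * (\<integral>\<^sup>+x. ?f (0 + c * x) \<partial>lborel)"
    by (rule nn_integral_real_affine) (use c in auto)
  also have "(\<lambda>x. ?f (0 + c * x)) = (\<lambda>x. ennreal (c powr (a - 1)) * ennreal (indicator {0..} x * x powr (a - 1) * exp (- c * x)))"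
  proof
    fix x :: real
    show "?f (0 + c * x) = ennreal (c powr (a - 1)) * ennreal (indicator {0..} x * x powr (a - 1) * exp (- c * x))"
    proof (cases "0 \<le> x")
      case True
      then have "(c * x) powr (a - 1) = c powr (a - 1) * x powr (a - 1)"
        using c by (simp add: powr_mult)
      then show ?thesis using True c
        by (simp add: ennreal_mult[symmetric] exp_minus field_simps zero_le_mult_iff)
    next
      case False
      then show ?thesis using c by (simp add: indicator_def zero_le_mult_iff)
    qed
  qed
  also have "(\<integral>\<^sup>+x. ennreal (c powr (a - 1)) * ennreal (indicator {0..} x * x powr (a - 1) * exp (- c * x)) \<partial>lborel)
      = ennreal (c powr (a - 1)) * (\<integral>\<^sup>+x. ennreal (indicator {0..} x * x powr (a - 1) * exp (- c * x)) \<partial>lborel)"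
    by (rule nn_integral_cmult) measurable
  finally have eq: "ennreal (Gamma a) = ennreal (c * c powr (a - 1)) * (\<integral>\<^sup>+x. ennreal (indicator {0..} x * x powr (a - 1) * exp (- c * x)) \<partial>lborel)"
    using c by (simp add: ennreal_mult mult.assoc)
  have cp: "c * c powr (a - 1) = c powr a" using c by (simp add: powr_diff)
  have pos: "0 < c powr a" using c by simp
  have gpos: "0 < Gamma a" using Gamma_real_pos_exp[OF a] by simp
  show ?thesis
  proof -
    have "ennreal (Gamma a / c powr a) = ennreal (inverse (c powr a)) * ennreal (Gamma a)"
      by (subst ennreal_mult[symmetric]) (use pos gpos in \<open>auto simp: divide_inverse mult.commute\<close>)
    also have "\<dots> = ennreal (inverse (c powr a)) * ennreal (c powr a) * (\<integral>\<^sup>+x. ennreal (indicator {0..} x * x powr (a - 1) * exp (- c * x)) \<partial>lborel)"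
      using eq cp by (simp add: mult.assoc)
    also have "ennreal (inverse (c powr a)) * ennreal (c powr a) = 1"
      using pos by (simp add: ennreal_mult[symmetric])
    finally show ?thesis by simp
  qed
qed

lemma H_eq: "exp (d * x) * gamma_dens k b x
   = (b powr k / Gamma k) * (indicator {0..} x * x powr (k - 1) * exp (- (b - d) * x))"
  unfolding gamma_dens_def
  by (cases "0 < x") (auto simp: indicator_def exp_minus exp_diff field_simps exp_add mult_exp_exp)

lemma int_H: assumes k: "0 < k" and bd: "d < b" and d: "0 < d"
  shows "(\<integral>\<^sup>+x. ennreal (exp (d * x) * gamma_dens k b x) \<partial>lborel) = ennreal (gamma_mgf_bound k b d)"
proof -
  have b0: "0 < b" using bd d by simp
  have g: "0 < Gamma k" using Gamma_pos_real[OF k] .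
  have "(\<integral>\<^sup>+x. ennreal (exp (d * x) * gamma_dens k b x) \<partial>lborel)
     = (\<integral>\<^sup>+x. ennreal (b powr k / Gamma k) * ennreal (indicator {0..} x * x powr (k - 1) * exp (- (b - d) * x)) \<partial>lborel)"
    unfolding H_eq by (intro nn_integral_cong, subst ennreal_mult[symmetric]) (use g b0 in auto)
  also have "\<dots> = ennreal (b powr k / Gamma k) * (\<integral>\<^sup>+x. ennreal (indicator {0..} x * x powr (k - 1) * exp (- (b - d) * x)) \<partial>lborel)"
    by (rule nn_integral_cmult) measurable
  also have "\<dots> = ennreal (b powr k / Gamma k) * ennreal (Gamma k / (b - d) powr k)"
    using gamma_nn_rate[OF k, of "b - d"] bd by simp
  also have "\<dots> = ennreal (b powr k / Gamma k * (Gamma k / (b - d) powr k))"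
    by (subst ennreal_mult[symmetric]) (use g b0 bd in auto)
  also have "b powr k / Gamma k * (Gamma k / (b - d) powr k) = gamma_mgf_bound k b d"
    unfolding gamma_mgf_bound_def using g b0 bd by (simp add: powr_divide)
  finally show ?thesis .
qed

lemma int_W: assumes km: "0 < km" and kk: "km \<le> kp" and e: "0 < e"
  shows "(\<integral>\<^sup>+x. ennreal (indicator {0..} x * (Pw km kp x * exp (- e * x))) \<partial>lborel)
     = ennreal (\<Sum>i<6. Gamma (ex km kp i) / e powr (ex km kp i))"
proof -
  have "(\<integral>\<^sup>+x. ennreal (indicator {0..} x * (Pw km kp x * exp (- e * x))) \<partial>lborel)
     = (\<integral>\<^sup>+x. (\<Sum>i<6. ennreal (indicator {0..} x * x powr (ex km kp i - 1) * exp (- e * x))) \<partial>lborel)"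
    unfolding Pw_def
    by (intro nn_integral_cong, subst sum_ennreal) (auto simp: sum_distrib_left sum_distrib_right ac_simps)
  also have "\<dots> = (\<Sum>i<6. (\<integral>\<^sup>+x. ennreal (indicator {0..} x * x powr (ex km kp i - 1) * exp (- e * x)) \<partial>lborel))"
    by (rule nn_integral_sum) measurable
  also have "\<dots> = (\<Sum>i<6. ennreal (Gamma (ex km kp i) / e powr (ex km kp i)))"
    using ex_pos[OF km kk] e by (intro sum.cong refl gamma_nn_rate) auto
  also have "\<dots> = ennreal (\<Sum>i<6. Gamma (ex km kp i) / e powr (ex km kp i))"
    using ex_pos[OF km kk] Gamma_pos_real e
    by (intro sum_ennreal) (auto intro!: divide_nonneg_pos less_imp_le)
  finally show ?thesis .
qed

theorem mainTheorem9:
  fixes \<delta> km kp bm bp :: real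
  assumes "0 < \<delta>" and "0 < km" and "km \<le> kp" and "\<delta> < bm" and "bm \<le> bp"
  shows "\<exists>Ck Cb :: real. \<forall>(M::nat) (\<pi> :: 'l \<Rightarrow> nat \<Rightarrow> real) (\<pi>h :: 'l \<Rightarrow> nat \<Rightarrow> real)
           (k :: nat \<Rightarrow> real) (b :: nat \<Rightarrow> real) (kh :: nat \<Rightarrow> real) (bh :: nat \<Rightarrow> real) (l::'l).
     (\<forall>m\<in>{1..M}. 0 \<le> \<pi> l m \<and> 0 \<le> \<pi>h l m) \<and>
     (\<Sum>m=1..M. \<pi> l m) = 1 \<and> (\<Sum>m=1..M. \<pi>h l m) = 1 \<and>
     (\<forall>m\<in>{1..M}. k m \<in> {km..kp} \<and> b m \<in> {bm..bp} \<and> kh m \<in> {km..kp} \<and> bh m \<in> {bm..bp})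
     \<longrightarrow> weighted_tv_dens \<delta> (gamma_mix_dens M (\<pi> l) k b) (gamma_mix_dens M (\<pi>h l) kh bh)
         \<le> ennreal ((\<Sum>m=1..M. \<bar>\<pi> l m - \<pi>h l m\<bar> * gamma_mgf_bound (k m) (b m) \<delta>)
                  + (\<Sum>m=1..M. \<pi>h l m * (Ck * \<bar>k m - kh m\<bar> + Cb * \<bar>b m - bh m\<bar>)))"
proof -
  note d = assms(1) and km = assms(2) and kk = assms(3) and db = assms(4) and bb = assms(5)
  have bm0: "0 < bm" using d db by simp
  obtain k0 where k0: "k0 \<in> {km..kp}" and k0max: "\<forall>y\<in>{km..kp}. rGamma y \<le> rGamma k0"
  proof -
    have "{km..kp} \<noteq> {}" using kk by simp
    from continuous_attains_sup[OF compact_Icc this continuous_on_rGamma]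
    show ?thesis using that by blast
  qed
  define Gi where "Gi = rGamma k0"
  have Gi: "\<forall>k\<in>{km..kp}. 1 / Gamma k \<le> Gi"
    using k0max unfolding Gi_def by (simp add: rGamma_inverse_Gamma inverse_eq_divide)
  have Gi0: "0 \<le> Gi"
    using Gi kk Gamma_pos_real[OF km] by (smt (verit) atLeastAtMost_iff divide_pos_pos)
  define Dg where "Dg = \<bar>Digamma km\<bar> + \<bar>Digamma kp\<bar>"
  have Dg: "\<forall>z\<in>{km..kp}. \<bar>Digamma z\<bar> \<le> Dg"
  proof
    fix z assume z: "z \<in> {km..kp}"
    have "Digamma km \<le> Digamma z" "Digamma z \<le> Digamma kp"
      using z km by (auto intro!: Digamma_real_mono)
    then show "\<bar>Digamma z\<bar> \<le> Dg" unfolding Dg_def by linarith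
  qed
  have Dg0: "0 \<le> Dg" unfolding Dg_def by simp
  define C where "C = Cst km kp bm bp Gi Dg"
  have C0: "0 \<le> C" unfolding C_def Cst_def using Gi0 Dg0 km kk bm0
    by (intro mult_nonneg_nonneg add_nonneg_nonneg) auto
  define e where "e = bm - \<delta>"
  have e0: "0 < e" unfolding e_def using db by simp
  define IW where "IW = (\<Sum>i<6. Gamma (ex km kp i) / e powr (ex km kp i))"
  have IW0: "0 \<le> IW" unfolding IW_def
    using ex_pos[OF km kk] Gamma_pos_real e0
    by (intro sum_nonneg) (auto intro!: divide_nonneg_pos less_imp_le)
  define CW where "CW = (\<lambda>x. C * (indicator {0..} x * (Pw km kp x * exp (- e * x))))"
  have CW0: "0 \<le> CW x" for x unfolding CW_def using C0 Pw_nonneg[of km kp x]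
    by (intro mult_nonneg_nonneg) auto
  have intCW: "(\<integral>\<^sup>+x. ennreal (CW x) \<partial>lborel) = ennreal (C * IW)"
  proof -
    have "(\<integral>\<^sup>+x. ennreal (CW x) \<partial>lborel) = (\<integral>\<^sup>+x. ennreal C * ennreal (indicator {0..} x * (Pw km kp x * exp (- e * x))) \<partial>lborel)"
      unfolding CW_def by (intro nn_integral_cong, subst ennreal_mult[symmetric]) (use C0 Pw_nonneg in auto)
    also have "\<dots> = ennreal C * (\<integral>\<^sup>+x. ennreal (indicator {0..} x * (Pw km kp x * exp (- e * x))) \<partial>lborel)"
      by (rule nn_integral_cmult) (unfold Pw_def, measurable)
    also have "\<dots> = ennreal C * ennreal IW" unfolding IW_def using int_W[OF km kk e0] by simp
    also have "\<dots> = ennreal (C * IW)" using C0 IW0 by (simp add: ennreal_mult)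
    finally show ?thesis .
  qed
  show ?thesis
  proof (intro exI[of _ "C * IW"] allI impI)
    fix M :: nat and \<pi> \<pi>h :: "'l \<Rightarrow> nat \<Rightarrow> real" and k b kh bh :: "nat \<Rightarrow> real" and l :: 'l
    assume H: "(\<forall>m\<in>{1..M}. 0 \<le> \<pi> l m \<and> 0 \<le> \<pi>h l m) \<and>
     (\<Sum>m=1..M. \<pi> l m) = 1 \<and> (\<Sum>m=1..M. \<pi>h l m) = 1 \<and>
     (\<forall>m\<in>{1..M}. k m \<in> {km..kp} \<and> b m \<in> {bm..bp} \<and> kh m \<in> {km..kp} \<and> bh m \<in> {bm..bp})"
    define p where "p = \<pi> l"
    define q where "q = \<pi>h l"
    have q0: "\<And>m. m \<in> {1..M} \<Longrightarrow> 0 \<le> q m" using H unfolding q_def by auto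
    have kin: "\<And>m. m \<in> {1..M} \<Longrightarrow> k m \<in> {km..kp} \<and> b m \<in> {bm..bp} \<and> kh m \<in> {km..kp} \<and> bh m \<in> {bm..bp}"
      using H by auto
    define T1 where "T1 = (\<lambda>m x. \<bar>p m - q m\<bar> * (exp (\<delta> * x) * gamma_dens (k m) (b m) x))"
    define c2 where "c2 = (\<lambda>m. q m * (\<bar>k m - kh m\<bar> + \<bar>b m - bh m\<bar>))"
    have c20: "\<And>m. m \<in> {1..M} \<Longrightarrow> 0 \<le> c2 m" unfolding c2_def using q0 by simp
    have gd0: "0 \<le> gamma_dens kk' bb' x" if "0 < kk'" for kk' bb' x
      unfolding gamma_dens_def using Gamma_pos_real[OF that] by simp
    have T10: "\<And>m x. m \<in> {1..M} \<Longrightarrow> 0 \<le> T1 m x" unfolding T1_def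
      using kin km gd0 by (intro mult_nonneg_nonneg) (auto, fastforce)
    have pw: "exp (\<delta> * x) * \<bar>gamma_mix_dens M p k b x - gamma_mix_dens M q kh bh x\<bar> * indicator {0..} x
        \<le> (\<Sum>m=1..M. T1 m x) + (\<Sum>m=1..M. c2 m * CW x)" for x
    proof (cases "0 < x")
      case False
      then have "gamma_mix_dens M p k b x = 0" "gamma_mix_dens M q kh bh x = 0"
        unfolding gamma_mix_dens_def gamma_dens_def by auto
      moreover have "0 \<le> (\<Sum>m=1..M. T1 m x) + (\<Sum>m=1..M. c2 m * CW x)"
        using T10 c20 CW0 by (intro add_nonneg_nonneg sum_nonneg mult_nonneg_nonneg) auto
      ultimately show ?thesis by simp
    next
      case x: True
      define ph where "ph = (\<lambda>m. phi \<delta> x (k m) (b m))"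
      define phh where "phh = (\<lambda>m. phi \<delta> x (kh m) (bh m))"
      have bpos: "\<And>m. m \<in> {1..M} \<Longrightarrow> 0 < b m \<and> 0 < bh m" using kin bm0 by force
      have ph0: "\<And>m. m \<in> {1..M} \<Longrightarrow> 0 \<le> ph m" unfolding ph_def
        using kin km by (intro phi_nonneg) force
      have "exp (\<delta> * x) * (gamma_mix_dens M p k b x - gamma_mix_dens M q kh bh x)
          = (\<Sum>m=1..M. p m * ph m) - (\<Sum>m=1..M. q m * phh m)"
        unfolding gamma_mix_dens_def ph_def phh_def right_diff_distrib sum_distrib_left
        using x bpos by (intro arg_cong2[where f = minus] sum.cong refl)
           (auto simp: phi_eq[symmetric] ac_simps)
      also have "\<dots> = (\<Sum>m=1..M. (p m - q m) * ph m) + (\<Sum>m=1..M. q m * (ph m - phh m))"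
        by (simp add: left_diff_distrib right_diff_distrib sum_subtractf)
      finally have eq: "exp (\<delta> * x) * (gamma_mix_dens M p k b x - gamma_mix_dens M q kh bh x)
          = (\<Sum>m=1..M. (p m - q m) * ph m) + (\<Sum>m=1..M. q m * (ph m - phh m))" .
      have "exp (\<delta> * x) * \<bar>gamma_mix_dens M p k b x - gamma_mix_dens M q kh bh x\<bar> * indicator {0..} x
          = \<bar>(\<Sum>m=1..M. (p m - q m) * ph m) + (\<Sum>m=1..M. q m * (ph m - phh m))\<bar>"
        using x eq[symmetric] by (simp add: abs_mult)
      also have "\<dots> \<le> (\<Sum>m=1..M. \<bar>(p m - q m) * ph m\<bar>) + (\<Sum>m=1..M. \<bar>q m * (ph m - phh m)\<bar>)"
        by (rule order.trans[OF abs_triangle_ineq add_mono[OF sum_abs sum_abs]])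
      also have "\<dots> \<le> (\<Sum>m=1..M. T1 m x) + (\<Sum>m=1..M. c2 m * CW x)"
      proof (intro add_mono sum_mono)
        fix m assume m: "m \<in> {1..M}"
        show "\<bar>(p m - q m) * ph m\<bar> \<le> T1 m x"
          unfolding T1_def using ph0[OF m] bpos[OF m] x
          by (simp add: abs_mult phi_eq ph_def)
        have "\<bar>ph m - phh m\<bar> \<le> (C * (Pw km kp x * exp (- (bm - \<delta>) * x))) * (\<bar>k m - kh m\<bar> + \<bar>b m - bh m\<bar>)"
          unfolding ph_def phh_def C_def
          using kin[OF m] by (intro lip[OF x km kk d db bb Gi Dg]) auto
        then have "\<bar>q m * (ph m - phh m)\<bar> \<le> q m * ((C * (Pw km kp x * exp (- (bm - \<delta>) * x))) * (\<bar>k m - kh m\<bar> + \<bar>b m - bh m\<bar>))"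
          using q0[OF m] by (simp add: abs_mult mult_left_mono)
        also have "\<dots> = c2 m * CW x" unfolding c2_def CW_def e_def using x by simp
        finally show "\<bar>q m * (ph m - phh m)\<bar> \<le> c2 m * CW x" .
      qed
      finally show ?thesis .
    qed
    have mT1: "(\<lambda>x. ennreal (T1 m x)) \<in> borel_measurable lborel" for m
      unfolding T1_def gamma_dens_def by measurable
    have mCW: "(\<lambda>x. ennreal (c2 m * CW x)) \<in> borel_measurable lborel" for m
      unfolding CW_def Pw_def by measurable
    have "weighted_tv_dens \<delta> (gamma_mix_dens M p k b) (gamma_mix_dens M q kh bh)
        \<le> (\<integral>\<^sup>+x. ((\<Sum>m\<in>{1..M}. ennreal (T1 m x)) + (\<Sum>m\<in>{1..M}. ennreal (c2 m * CW x))) \<partial>lborel)"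
      unfolding weighted_tv_dens_def
    proof (rule nn_integral_mono)
      fix x
      have "ennreal (exp (\<delta> * x) * \<bar>gamma_mix_dens M p k b x - gamma_mix_dens M q kh bh x\<bar>) * indicator {0..} x
          = ennreal (exp (\<delta> * x) * \<bar>gamma_mix_dens M p k b x - gamma_mix_dens M q kh bh x\<bar> * indicator {0..} x)"
        by (simp add: indicator_def)
      also have "\<dots> \<le> ennreal ((\<Sum>m=1..M. T1 m x) + (\<Sum>m=1..M. c2 m * CW x))"
        using pw by (rule ennreal_leI)
      also have "\<dots> = (\<Sum>m\<in>{1..M}. ennreal (T1 m x)) + (\<Sum>m\<in>{1..M}. ennreal (c2 m * CW x))"
      proof -
        have a: "(\<Sum>m\<in>{1..M}. ennreal (T1 m x)) = ennreal (\<Sum>m=1..M. T1 m x)"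
          by (rule sum_ennreal) (use T10 in auto)
        have b: "(\<Sum>m\<in>{1..M}. ennreal (c2 m * CW x)) = ennreal (\<Sum>m=1..M. c2 m * CW x)"
          by (rule sum_ennreal) (use c20 CW0 in auto)
        show ?thesis unfolding a b
          by (rule ennreal_plus) (use T10 c20 CW0 in \<open>auto intro!: sum_nonneg mult_nonneg_nonneg\<close>)
      qed
      finally show "ennreal (exp (\<delta> * x) * \<bar>gamma_mix_dens M p k b x - gamma_mix_dens M q kh bh x\<bar>) * indicator {0..} x
          \<le> (\<Sum>m\<in>{1..M}. ennreal (T1 m x)) + (\<Sum>m\<in>{1..M}. ennreal (c2 m * CW x))" .
    qed
    also have "\<dots> = (\<integral>\<^sup>+x. (\<Sum>m\<in>{1..M}. ennreal (T1 m x)) \<partial>lborel) + (\<integral>\<^sup>+x. (\<Sum>m\<in>{1..M}. ennreal (c2 m * CW x)) \<partial>lborel)"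
      using mT1 mCW by (intro nn_integral_add borel_measurable_sum) auto
    also have "\<dots> = (\<Sum>m\<in>{1..M}. (\<integral>\<^sup>+x. ennreal (T1 m x) \<partial>lborel)) + (\<Sum>m\<in>{1..M}. (\<integral>\<^sup>+x. ennreal (c2 m * CW x) \<partial>lborel))"
      using mT1 mCW by (simp add: nn_integral_sum)
    also have "\<dots> = (\<Sum>m\<in>{1..M}. ennreal (\<bar>p m - q m\<bar> * gamma_mgf_bound (k m) (b m) \<delta>)) + (\<Sum>m\<in>{1..M}. ennreal (c2 m * (C * IW)))"
    proof (intro arg_cong2[where f = plus] sum.cong refl)
      fix m assume m: "m \<in> {1..M}"
      have kpos: "0 < k m" and bd: "\<delta> < b m" using kin[OF m] km db by auto
      have "(\<integral>\<^sup>+x. ennreal (T1 m x) \<partial>lborel) = (\<integral>\<^sup>+x. ennreal \<bar>p m - q m\<bar> * ennreal (exp (\<delta> * x) * gamma_dens (k m) (b m) x) \<partial>lborel)"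
        unfolding T1_def by (intro nn_integral_cong, subst ennreal_mult[symmetric]) (use gd0 kpos in auto)
      also have "\<dots> = ennreal \<bar>p m - q m\<bar> * (\<integral>\<^sup>+x. ennreal (exp (\<delta> * x) * gamma_dens (k m) (b m) x) \<partial>lborel)"
        by (rule nn_integral_cmult) (unfold gamma_dens_def, measurable)
      also have "\<dots> = ennreal (\<bar>p m - q m\<bar> * gamma_mgf_bound (k m) (b m) \<delta>)"
        unfolding int_H[OF kpos bd d]
        by (subst ennreal_mult[symmetric]) (auto simp: gamma_mgf_bound_def)
      finally show "(\<integral>\<^sup>+x. ennreal (T1 m x) \<partial>lborel) = ennreal (\<bar>p m - q m\<bar> * gamma_mgf_bound (k m) (b m) \<delta>)" .
      have "(\<integral>\<^sup>+x. ennreal (c2 m * CW x) \<partial>lborel) = (\<integral>\<^sup>+x. ennreal (c2 m) * ennreal (CW x) \<partial>lborel)"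
        by (intro nn_integral_cong, subst ennreal_mult[symmetric]) (use c20[OF m] CW0 in auto)
      also have "\<dots> = ennreal (c2 m) * (\<integral>\<^sup>+x. ennreal (CW x) \<partial>lborel)"
        by (rule nn_integral_cmult) (unfold CW_def Pw_def, measurable)
      also have "\<dots> = ennreal (c2 m * (C * IW))"
        unfolding intCW by (subst ennreal_mult[symmetric]) (use c20[OF m] C0 IW0 in auto)
      finally show "(\<integral>\<^sup>+x. ennreal (c2 m * CW x) \<partial>lborel) = ennreal (c2 m * (C * IW))" .
    qed
    also have "\<dots> = ennreal ((\<Sum>m=1..M. \<bar>p m - q m\<bar> * gamma_mgf_bound (k m) (b m) \<delta>)
                  + (\<Sum>m=1..M. q m * ((C * IW) * \<bar>k m - kh m\<bar> + (C * IW) * \<bar>b m - bh m\<bar>)))"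
    proof -
      have mg0: "\<And>m. 0 \<le> \<bar>p m - q m\<bar> * gamma_mgf_bound (k m) (b m) \<delta>"
        unfolding gamma_mgf_bound_def by simp
      have "(\<Sum>m=1..M. c2 m * (C * IW)) = (\<Sum>m=1..M. q m * ((C * IW) * \<bar>k m - kh m\<bar> + (C * IW) * \<bar>b m - bh m\<bar>))"
        unfolding c2_def by (simp add: algebra_simps)
      moreover have "0 \<le> (\<Sum>m=1..M. c2 m * (C * IW))"
        using c20 C0 IW0 by (intro sum_nonneg mult_nonneg_nonneg) auto
      ultimately show ?thesis
      proof -
        assume eqs: "(\<Sum>m=1..M. c2 m * (C * IW)) = (\<Sum>m=1..M. q m * ((C * IW) * \<bar>k m - kh m\<bar> + (C * IW) * \<bar>b m - bh m\<bar>))"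
          and nn: "0 \<le> (\<Sum>m=1..M. c2 m * (C * IW))"
        have s1: "(\<Sum>m\<in>{1..M}. ennreal (\<bar>p m - q m\<bar> * gamma_mgf_bound (k m) (b m) \<delta>))
            = ennreal (\<Sum>m=1..M. \<bar>p m - q m\<bar> * gamma_mgf_bound (k m) (b m) \<delta>)"
          by (rule sum_ennreal) (rule mg0)
        have s2: "(\<Sum>m\<in>{1..M}. ennreal (c2 m * (C * IW))) = ennreal (\<Sum>m=1..M. c2 m * (C * IW))"
          by (rule sum_ennreal) (use c20 C0 IW0 in auto)
        have nn1: "0 \<le> (\<Sum>m=1..M. \<bar>p m - q m\<bar> * gamma_mgf_bound (k m) (b m) \<delta>)"
          by (rule sum_nonneg) (rule mg0)
        show ?thesis unfolding s1 s2 eqs[symmetric]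
          by (rule ennreal_plus[symmetric]) (use nn1 nn eqs in auto)
      qed
    qed
    finally show "weighted_tv_dens \<delta> (gamma_mix_dens M (\<pi> l) k b) (gamma_mix_dens M (\<pi>h l) kh bh)
         \<le> ennreal ((\<Sum>m=1..M. \<bar>\<pi> l m - \<pi>h l m\<bar> * gamma_mgf_bound (k m) (b m) \<delta>)
                  + (\<Sum>m=1..M. \<pi>h l m * ((C * IW) * \<bar>k m - kh m\<bar> + (C * IW) * \<bar>b m - bh m\<bar>)))"
      unfolding p_def q_def .
  qed
qed

end
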